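(* Consider binary node classification with classes $\{0,1\}$, let $k\in\{0,1\}$, and let $c_0,c_1\in(0,1)$ be the class homophily parameters. Assume the classes are balanced ($P(\hat{Y}=0)=P(\hat{Y}=1)$), the graph is heterophilic ($c_k<1-c_{1-k}$), and $0<c_k<0.5$. If two nodes $n$ and $m$ have the same degree $d$ and $|\mathcal{N}_k(n)| > |\mathcal{N}_k(m)|$, then $$P\big(\hat{Y}_{n} = k \mid \{Y_j\}_{j\in\mathcal{N}(n)}\big) < P\big(\hat{Y}_{m} = k \mid \{Y_j\}_{j\in\mathcal{N}(m)}\big).$$
   Context: Model: each node $i$ has a (latent/soft) class $\hat{Y}_i\in\{0,1\}$, and each neighbor $j\in\mathcal{N}(i)$ has an observed label $Y_j\in\{0,1\}$. Given $\hat{Y}_i$, the neighbor labels are conditionally independent with $P(Y_j=k\mid \hat{Y}_i=k)=c_k$ and $P(Y_j=1-k\mid\hat{Y}_i=k)=1-c_k$ for $k\in\{0,1\}$ ($c_k$ is the class homophily of class $k$). The posterior is obtained by Bayes' rule: $P(\hat Y_i=k\mid\{Y_j=y_j\}_{j\in\mathcal N(i)})\propto P(\hat Y_i=k)\prod_{j\in\mathcal N(i)}P(Y_j=y_j\mid \hat Y_i=k)$, conditioning on the observed neighbor labels. Notation: $\mathcal{N}_k(i)=\{j\in\mathcal{N}(i): y_j=k\}$, $\mathcal{N}_{1-k}(i)=\{j\in\mathcal{N}(i): y_j=1-k\}$, and the degree of $i$ is $|\mathcal N(i)|=|\mathcal{N}_k(i)|+|\mathcal{N}_{1-k}(i)|$.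 *)

theory Defs
  imports Complex_Main
begin

text \<open>Classes and labels are the naturals 0 and 1. c k is the class homophily of class k.
  Likelihood of an observed neighbour label y given latent class k of the centre node.\<close>
definition lik :: "(nat \<Rightarrow> real) \<Rightarrow> nat \<Rightarrow> nat \<Rightarrow> real" where
  "lik c k y = (if y = k then c k else 1 - c k)"

text \<open>Posterior P(Yhat_i = k | {Y_j = y j}_{j in Nb}) by Bayes' rule, with prior
  P(Yhat = k') = prior k', neighbours conditionally independent.\<close>
definition posterior :: "(nat \<Rightarrow> real) \<Rightarrow> (nat \<Rightarrow> real) \<Rightarrow> ('a \<Rightarrow> nat) \<Rightarrow> 'a set \<Rightarrow> nat \<Rightarrow> real" where
  "posterior prior c y Nb k =
     prior k * (\<Prod>j\<in>Nb. lik c k (y j)) /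
     (\<Sum>k'\<in>{0,1}. prior k' * (\<Prod>j\<in>Nb. lik c k' (y j)))"

end

theory Submission
  imports Defs
begin

lemma prod_split:
  fixes S :: "'a set" and g :: "'a \<Rightarrow> real"
  assumes "finite S" "\<forall>j\<in>S. g j = (if P j then u else v)"
  shows "(\<Prod>j\<in>S. g j) = u ^ card {j\<in>S. P j} * v ^ card {j\<in>S. \<not> P j}"
proof -
  have "(\<Prod>j\<in>S. g j) = (\<Prod>j\<in>{j\<in>S. P j}. g j) * (\<Prod>j\<in>{j\<in>S. \<not> P j}. g j)"
  proof -
    have eq: "{j\<in>S. P j} \<union> {j\<in>S. \<not> P j} = S" by auto
    have "(\<Prod>j\<in>{j\<in>S. P j} \<union> {j\<in>S. \<not> P j}. g j) = (\<Prod>j\<in>{j\<in>S. P j}. g j) * (\<Prod>j\<in>{j\<in>S. \<not> P j}. g j)"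
      by (rule prod.union_disjoint) (use assms(1) in auto)
    then show ?thesis by (simp only: eq)
  qed
  also have "(\<Prod>j\<in>{j\<in>S. P j}. g j) = (\<Prod>j\<in>{j\<in>S. P j}. u)"
    using assms(2) by (intro prod.cong) auto
  also have "\<dots> = u ^ card {j\<in>S. P j}" by simp
  also have "(\<Prod>j\<in>{j\<in>S. \<not> P j}. g j) = (\<Prod>j\<in>{j\<in>S. \<not> P j}. v)"
    using assms(2) by (intro prod.cong) auto
  also have "\<dots> = v ^ card {j\<in>S. \<not> P j}" by simp
  finally show ?thesis .
qed

lemma card_compl:
  assumes "finite S"
  shows "card {j\<in>S. \<not> P j} = card S - card {j\<in>S. P j}"
proof -
  have "{j\<in>S. \<not> P j} = S - {j\<in>S. P j}" by auto
  then show ?thesis using assms by (simp add: card_Diff_subset)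
qed

lemma post_form:
  fixes c prior :: "nat \<Rightarrow> real" and y :: "'a \<Rightarrow> nat"
  assumes k: "k \<in> {0,1}" and fin: "finite S" and lab: "\<forall>j\<in>S. y j \<in> {0,1}"
    and p: "prior 0 = prior 1"
  shows "posterior prior c y S k =
    prior k * (c k ^ card {j\<in>S. y j = k} * (1 - c k) ^ card {j\<in>S. y j \<noteq> k}) /
    (prior k * (c k ^ card {j\<in>S. y j = k} * (1 - c k) ^ card {j\<in>S. y j \<noteq> k})
     + prior k * ((1 - c (1-k)) ^ card {j\<in>S. y j = k} * c (1-k) ^ card {j\<in>S. y j \<noteq> k}))"
proof -
  have A: "(\<Prod>j\<in>S. lik c k (y j)) = c k ^ card {j\<in>S. y j = k} * (1 - c k) ^ card {j\<in>S. y j \<noteq> k}"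
    by (rule prod_split[OF fin]) (simp add: lik_def)
  have B: "(\<Prod>j\<in>S. lik c (1-k) (y j)) = (1 - c (1-k)) ^ card {j\<in>S. y j = k} * c (1-k) ^ card {j\<in>S. y j \<noteq> k}"
    by (rule prod_split[OF fin]) (use lab k in \<open>auto simp add: lik_def\<close>)
  have sum: "(\<Sum>k'\<in>{0,1}. prior k' * (\<Prod>j\<in>S. lik c k' (y j))) =
     prior k * (\<Prod>j\<in>S. lik c k (y j)) + prior k * (\<Prod>j\<in>S. lik c (1-k) (y j))"
    using k p by auto
  show ?thesis unfolding posterior_def sum A B by simp
qed

theorem mainTheorem3:
  fixes N :: "'a \<Rightarrow> 'a set" and y :: "'a \<Rightarrow> nat"
    and prior c :: "nat \<Rightarrow> real" and k d :: nat and n m :: 'a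
  assumes k: "k \<in> {0, 1}"
    and c0: "0 < c 0 \<and> c 0 < 1" and c1: "0 < c 1 \<and> c 1 < 1"
    and prior_nonneg: "prior 0 \<ge> 0" "prior 1 \<ge> 0"
    and prior_sum: "prior 0 + prior 1 = 1"
    and balanced: "prior 0 = prior 1"
    and heterophilic: "c k < 1 - c (1 - k)"
    and ck: "0 < c k \<and> c k < 1/2"
    and labels: "\<forall>j \<in> N n \<union> N m. y j \<in> {0, 1}"
    and fin: "finite (N n)" "finite (N m)"
    and deg: "card (N n) = d" "card (N m) = d"
    and more: "card {j \<in> N n. y j = k} > card {j \<in> N m. y j = k}"
  shows "posterior prior c y (N n) k < posterior prior c y (N m) k"
proof -
  define a where "a = c k"
  define b where "b = c (1-k)"
  define p where "p = prior k"
  have p: "p = 1/2" using k prior_sum balanced unfolding p_def by auto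
  have a: "0 < a" "a < 1" using ck unfolding a_def by auto
  have b: "0 < b" "b < 1" using c0 c1 k unfolding b_def by auto
  have ab: "a * b < (1-a)*(1-b)" using heterophilic unfolding a_def b_def by (simp add: algebra_simps)
  define s where "s = card {j \<in> N m. y j = k}"
  define e where "e = card {j \<in> N n. y j = k} - s"
  have e: "e > 0" using more unfolding e_def s_def by simp
  have sn: "card {j \<in> N n. y j = k} = s + e" using more unfolding e_def s_def by simp
  define t where "t = card {j \<in> N n. y j \<noteq> k}"
  have tm: "card {j \<in> N m. y j \<noteq> k} = t + e"
  proof -
    have "card {j \<in> N n. y j = k} \<le> d" using deg fin by (metis (no_types, lifting) card_mono mem_Collect_eq subsetI)
    moreover have "card {j \<in> N m. y j = k} \<le> d" using deg fin by (metis (no_types, lifting) card_mono mem_Collect_eq subsetI)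
    ultimately show ?thesis using card_compl[OF fin(1), of "\<lambda>j. y j = k"] card_compl[OF fin(2), of "\<lambda>j. y j = k"]
      deg sn unfolding t_def s_def by simp
  qed
  have Pn: "posterior prior c y (N n) k = p * (a^(s+e) * (1-a)^t) / (p * (a^(s+e) * (1-a)^t) + p * ((1-b)^(s+e) * b^t))"
    using post_form[OF k fin(1), of y prior c] labels balanced sn unfolding a_def b_def p_def t_def by simp
  have Pm: "posterior prior c y (N m) k = p * (a^s * (1-a)^(t+e)) / (p * (a^s * (1-a)^(t+e)) + p * ((1-b)^s * b^(t+e)))"
    using post_form[OF k fin(2), of y prior c] labels balanced tm unfolding a_def b_def p_def s_def by simp
  define X where "X = a^s * (1-a)^t * (1-b)^s * b^t"
  have X: "X > 0" unfolding X_def using a b by simp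
  have pow: "(a*b)^e < ((1-a)*(1-b))^e"
    using ab e a b by (intro power_strict_mono) auto
  have key: "(a^(s+e) * (1-a)^t) * ((1-b)^s * b^(t+e)) < (a^s * (1-a)^(t+e)) * ((1-b)^(s+e) * b^t)"
  proof -
    have "(a^(s+e) * (1-a)^t) * ((1-b)^s * b^(t+e)) = X * (a*b)^e"
      unfolding X_def by (simp add: power_add power_mult_distrib algebra_simps)
    also have "\<dots> < X * ((1-a)*(1-b))^e" using X pow by simp
    also have "\<dots> = (a^s * (1-a)^(t+e)) * ((1-b)^(s+e) * b^t)"
      unfolding X_def power_add power_mult_distrib by (simp add: ac_simps)
    finally show ?thesis .
  qed
  define L1 where "L1 = a^(s+e) * (1-a)^t"
  define M1 where "M1 = (1-b)^(s+e) * b^t"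
  define L2 where "L2 = a^s * (1-a)^(t+e)"
  define M2 where "M2 = (1-b)^s * b^(t+e)"
  have pos: "L1 > 0" "M1 > 0" "L2 > 0" "M2 > 0" unfolding L1_def M1_def L2_def M2_def using a b by auto
  have "p * L1 / (p * L1 + p * M1) < p * L2 / (p * L2 + p * M2)"
  proof -
    have "p * L1 / (p * L1 + p * M1) = L1 / (L1 + M1)" using p by (simp add: distrib_left[symmetric])
    moreover have "p * L2 / (p * L2 + p * M2) = L2 / (L2 + M2)" using p by (simp add: distrib_left[symmetric])
    moreover have "L1 / (L1 + M1) < L2 / (L2 + M2)"
      using pos key unfolding L1_def[symmetric] M2_def[symmetric] L2_def[symmetric] M1_def[symmetric]
      by (simp add: divide_simps algebra_simps)
    ultimately show ?thesis by simp
  qed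
  then show ?thesis using Pn Pm unfolding L1_def M1_def L2_def M2_def by simp
qed

end
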